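(* Let $(M,F)$ be a Finsler manifold, $V$ a homothetic vector field with dilation $c$ and flow $\Psi_t$, with $F(x,-V(x))>1$ everywhere. Let $f$ be a transnormal function defined near $x_0$ with $f(x_0)=0$, $F(\nabla^F f)\equiv1$, and $\langle\nabla^F f(x),V(x)\rangle^F_{\nabla^F f(x)}<-1$ near $x_0$. Let $M_s=f^{-1}(s)$ and define $\Psi$ near $x_0$ by $\Psi|_{M_{\alpha_c(t)}}=\Psi_t$ (for $t$ near $0$). Then, on a sufficiently small neighborhood of $x_0$, $\Psi$ is an orientation reversing diffeomorphism onto its image.
   Context: Finsler metric $F$ with fundamental tensor $\langle u,v\rangle^F_y=\frac12\frac{\partial^2}{\partial s\partial t}|_0F^2(y+su+tv)$. Gradient $\nabla^F f$: the vector field with $\langle\nabla^F f,u\rangle^F_{\nabla^F f}=\mathrm df(u)$. Transnormal: $F(\nabla^F f)$ depends only on values of $f$. $V$ homothetic with dilation $c$: flow satisfies $F(\Psi_t(x),(\Psi_t)_*y)=e^{-2ct}F(x,y)$. $\alpha_c(t)=t$ if $c=0$, $\alpha_c(t)=\frac{e^{2ct}-1}{2c}$ otherwise. *)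

theory Defs
  imports "HOL-Analysis.Analysis"
begin

fun Ck_on :: "nat \<Rightarrow> 'a::euclidean_space set \<Rightarrow> ('a \<Rightarrow> 'b::real_normed_vector) \<Rightarrow> bool" where
  "Ck_on 0 S g = continuous_on S g"
| "Ck_on (Suc k) S g =
     ((\<forall>x\<in>S. g differentiable (at x)) \<and>
      (\<forall>v. Ck_on k S (\<lambda>x. frechet_derivative g (at x) v)))"

definition smooth_on :: "'a::euclidean_space set \<Rightarrow> ('a \<Rightarrow> 'b::real_normed_vector) \<Rightarrow> bool" where
  "smooth_on S g \<longleftrightarrow> open S \<and> (\<forall>k. Ck_on k S g)"

definition fund_tensor ::
  "(real^'n \<Rightarrow> real^'n \<Rightarrow> real) \<Rightarrow> real^'n \<Rightarrow> real^'n \<Rightarrow> real^'n \<Rightarrow> real^'n \<Rightarrow> real"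
  where "fund_tensor F x y u v =
     (1/2) * deriv (\<lambda>s. deriv (\<lambda>t. (F x (y + s *\<^sub>R u + t *\<^sub>R v))^2) 0) 0"

text \<open>Finsler metric on the open set U (a chart domain of M), F(x,y) for y in T_xM = R^n.\<close>
definition finsler_metric :: "(real^'n) set \<Rightarrow> (real^'n \<Rightarrow> real^'n \<Rightarrow> real) \<Rightarrow> bool" where
  "finsler_metric U F \<longleftrightarrow>
     open U \<and>
     continuous_on (U \<times> UNIV) (\<lambda>(x,y). F x y) \<and>
     smooth_on (U \<times> (UNIV - {0})) (\<lambda>(x,y). F x y) \<and>
     (\<forall>x\<in>U. \<forall>y. y \<noteq> 0 \<longrightarrow> F x y > 0) \<and>
     (\<forall>x\<in>U. \<forall>y. \<forall>r>0. F x (r *\<^sub>R y) = r * F x y) \<and>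
     (\<forall>x\<in>U. \<forall>y. y \<noteq> 0 \<longrightarrow> (\<forall>u. u \<noteq> 0 \<longrightarrow> fund_tensor F x y u u > 0))"

definition is_finsler_gradient ::
  "(real^'n \<Rightarrow> real^'n \<Rightarrow> real) \<Rightarrow> (real^'n \<Rightarrow> real) \<Rightarrow> real^'n \<Rightarrow> real^'n \<Rightarrow> bool" where
  "is_finsler_gradient F f x g \<longleftrightarrow> (\<forall>u. fund_tensor F x g g u = frechet_derivative f (at x) u)"

definition is_local_flow ::
  "(real^'n) set \<Rightarrow> (real^'n \<Rightarrow> real^'n) \<Rightarrow> (real \<times> (real^'n)) set \<Rightarrow> (real \<Rightarrow> real^'n \<Rightarrow> real^'n) \<Rightarrow> bool" where
  "is_local_flow U V D Psi \<longleftrightarrow>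
     open D \<and> D \<subseteq> UNIV \<times> U \<and> (\<forall>x\<in>U. (0, x) \<in> D) \<and>
     (\<forall>x\<in>U. is_interval {t. (t, x) \<in> D}) \<and>
     smooth_on D (\<lambda>(t,x). Psi t x) \<and>
     (\<forall>(t,x)\<in>D. Psi t x \<in> U) \<and>
     (\<forall>x\<in>U. Psi 0 x = x) \<and>
     (\<forall>(t,x)\<in>D. ((\<lambda>s. Psi s x) has_vector_derivative V (Psi t x)) (at t))"

definition homothetic ::
  "(real^'n \<Rightarrow> real^'n \<Rightarrow> real) \<Rightarrow> (real \<times> (real^'n)) set \<Rightarrow> (real \<Rightarrow> real^'n \<Rightarrow> real^'n) \<Rightarrow> real \<Rightarrow> bool" where
  "homothetic F D Psi c \<longleftrightarrow>
     (\<forall>(t,x)\<in>D. \<forall>y. F (Psi t x) (frechet_derivative (Psi t) (at x) y) = exp (-2*c*t) * F x y)"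

definition alpha :: "real \<Rightarrow> real \<Rightarrow> real" where
  "alpha c t = (if c = 0 then t else (exp (2*c*t) - 1) / (2*c))"

text \<open>The map Psi with Psi restricted to M_{alpha_c(t)} equal to Psi_t.\<close>
definition level_flow_map ::
  "real \<Rightarrow> (real^'n \<Rightarrow> real) \<Rightarrow> (real \<Rightarrow> real^'n \<Rightarrow> real^'n) \<Rightarrow> real^'n \<Rightarrow> real^'n" where
  "level_flow_map c f Psi x = Psi (THE t. alpha c t = f x) x"

definition diffeo_onto_image :: "(real^'n) set \<Rightarrow> (real^'n \<Rightarrow> real^'n) \<Rightarrow> bool" where
  "diffeo_onto_image N g \<longleftrightarrow>
     open N \<and> inj_on g N \<and> open (g ` N) \<and> smooth_on N g \<and> smooth_on (g ` N) (the_inv_into N g)"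

definition orientation_reversing_on :: "(real^'n) set \<Rightarrow> (real^'n \<Rightarrow> real^'n) \<Rightarrow> bool" where
  "orientation_reversing_on N g \<longleftrightarrow>
     (\<forall>x\<in>N. det (matrix (frechet_derivative g (at x))) < 0)"

end

theory Submission
  imports Defs
begin


lemma Ck_on_subset: "Ck_on k S g \<Longrightarrow> T \<subseteq> S \<Longrightarrow> Ck_on k T g"
proof (induction k arbitrary: g)
  case 0 then show ?case by (auto intro: continuous_on_subset)
next
  case (Suc k)
  have "Ck_on k T (\<lambda>x. frechet_derivative g (at x) v)" for v
    using Suc.IH[of "\<lambda>x. frechet_derivative g (at x) v"] Suc.prems by simp
  then show ?case using Suc.prems by auto
qed

lemma Ck_on_Suc_imp: "Ck_on (Suc k) S g \<Longrightarrow> Ck_on k S g"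
proof (induction k arbitrary: g)
  case 0
  then show ?case
    by (auto intro!: continuous_at_imp_continuous_on differentiable_imp_continuous_within)
next
  case (Suc k)
  have d: "\<forall>x\<in>S. g differentiable at x" and c: "\<And>v. Ck_on (Suc k) S (\<lambda>x. frechet_derivative g (at x) v)"
    using Suc.prems by simp_all
  have "Ck_on k S (\<lambda>x. frechet_derivative g (at x) v)" for v
    by (rule Suc.IH[OF c])
  then show ?case using d by simp
qed

lemma Ck_on_le: "Ck_on k S g \<Longrightarrow> m \<le> k \<Longrightarrow> Ck_on m S g"
proof (induction k)
  case 0 then have "m = 0" by simp
  with 0 show ?case by (simp only:)
next
  case (Suc k)
  show ?case
  proof (cases "m = Suc k")
    case True from Suc.prems(1) show ?thesis by (simp only: True)
  next
    case False
    then have B: "m \<le> k" using Suc.prems(2) by simp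
    have A: "Ck_on k S g" by (rule Ck_on_Suc_imp[OF Suc.prems(1)])
    show ?thesis by (rule Suc.IH[OF A B])
  qed
qed

lemma diff_transform_open:
  assumes "f differentiable at x" "open S" "x \<in> S" "\<And>y. y \<in> S \<Longrightarrow> f y = g y"
  shows "g differentiable at x"
  using assms unfolding differentiable_def
  using has_derivative_transform_within_open by blast

lemma Ck_on_cong:
  assumes "open S" "\<And>x. x \<in> S \<Longrightarrow> g x = h x"
  shows "Ck_on k S g = Ck_on k S h"
  using assms(2)
proof (induction k arbitrary: g h)
  case 0
  have "continuous_on S g = continuous_on S h"
    by (rule continuous_on_cong[OF refl]) (rule 0)
  then show ?case by (simp only: Ck_on.simps)
next
  case (Suc k)
  have d: "g differentiable (at x) \<longleftrightarrow> h differentiable (at x)" if "x \<in> S" for x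
  proof
    assume "g differentiable at x"
    then show "h differentiable at x"
      by (rule diff_transform_open[OF _ assms(1) that]) (rule Suc.prems)
  next
    assume "h differentiable at x"
    then show "g differentiable at x"
      by (rule diff_transform_open[OF _ assms(1) that]) (rule Suc.prems[symmetric])
  qed
  have fd: "frechet_derivative g (at x) = frechet_derivative h (at x)"
    if "x \<in> S" "g differentiable (at x)" for x
    using that(2) assms(1) that(1) Suc.prems by (rule frechet_derivative_transform_within_open[where X=S])
  show ?case
  proof (cases "\<forall>x\<in>S. g differentiable at x")
    case True
    have e: "Ck_on k S (\<lambda>x. frechet_derivative g (at x) v) = Ck_on k S (\<lambda>x. frechet_derivative h (at x) v)" for v
    proof (rule Suc.IH)
      fix x assume "x \<in> S"
      then show "frechet_derivative g (at x) v = frechet_derivative h (at x) v"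
        using fd[of x] True by simp
    qed
    have "\<forall>x\<in>S. h differentiable at x" using True d by simp
    then show ?thesis using True e by (simp only: Ck_on.simps) blast
  next
    case False
    then have "\<not> (\<forall>x\<in>S. h differentiable at x)" using d by simp
    then show ?thesis using False by (simp only: Ck_on.simps) blast
  qed
qed

lemma Ck_on_const: "Ck_on k S (\<lambda>x. c)"
proof (induction k arbitrary: c)
  case 0 then show ?case by simp
next
  case (Suc k) then show ?case by simp
qed

lemma Ck_on_linear:
  assumes "bounded_linear L" "open S" "Ck_on k S f"
  shows "Ck_on k S (\<lambda>x. L (f x))"
  using assms(3)
proof (induction k arbitrary: f)
  case 0 then show ?case
    using assms(1) by (simp add: bounded_linear.continuous_on)
next
  case (Suc k)
  have hd: "((\<lambda>x. L (f x)) has_derivative (\<lambda>v. L (frechet_derivative f (at x) v))) (at x)"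
    if "x \<in> S" for x
    using Suc.prems that bounded_linear.has_derivative[OF assms(1)]
    by (auto simp: frechet_derivative_works)
  have "Ck_on k S (\<lambda>x. frechet_derivative (\<lambda>x. L (f x)) (at x) v)" for v
  proof -
    have "Ck_on k S (\<lambda>x. L (frechet_derivative f (at x) v))"
      by (rule Suc.IH) (use Suc.prems in simp)
    moreover have "Ck_on k S (\<lambda>x. frechet_derivative (\<lambda>x. L (f x)) (at x) v)
        = Ck_on k S (\<lambda>x. L (frechet_derivative f (at x) v))"
      using hd by (intro Ck_on_cong assms) (metis frechet_derivative_at)
    ultimately show ?thesis by simp
  qed
  moreover have "\<forall>x\<in>S. (\<lambda>x. L (f x)) differentiable at x" using hd differentiableI by blast
  ultimately show ?case by simp
qed



lemma Ck_on_SucI: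
  assumes S: "open S"
    and hd: "\<And>x. x \<in> S \<Longrightarrow> (g has_derivative g' x) (at x)"
    and ck: "\<And>v. Ck_on k S (\<lambda>x. g' x v)"
  shows "Ck_on (Suc k) S g"
proof -
  have d: "\<forall>x\<in>S. g differentiable at x" using hd differentiableI by blast
  have "Ck_on k S (\<lambda>x. frechet_derivative g (at x) v)" for v
  proof -
    have "Ck_on k S (\<lambda>x. frechet_derivative g (at x) v) = Ck_on k S (\<lambda>x. g' x v)"
    proof (rule Ck_on_cong[OF S])
      fix x assume "x \<in> S"
      then have "frechet_derivative g (at x) = g' x" by (rule frechet_derivative_at[OF hd, symmetric])
      then show "frechet_derivative g (at x) v = g' x v" by simp
    qed
    then show ?thesis using ck by simp
  qed
  then show ?thesis using d by (simp only: Ck_on.simps) blast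
qed

lemma Ck_on_SucD1: "Ck_on (Suc k) S g \<Longrightarrow> x \<in> S \<Longrightarrow> (g has_derivative frechet_derivative g (at x)) (at x)"
  by (simp add: frechet_derivative_works[symmetric])

lemma Ck_on_SucD2: "Ck_on (Suc k) S g \<Longrightarrow> Ck_on k S (\<lambda>x. frechet_derivative g (at x) v)"
  by simp

lemma Ck_on_SucD0: "Ck_on (Suc k) S g \<Longrightarrow> Ck_on k S g"
  by (rule Ck_on_Suc_imp)

lemma Ck_on_add:
  assumes S: "open S"
  shows "Ck_on k S f \<Longrightarrow> Ck_on k S g \<Longrightarrow> Ck_on k S (\<lambda>x. f x + g x)"
proof (induction k arbitrary: f g)
  case 0 then show ?case by (simp add: continuous_on_add)
next
  case (Suc k)
  show ?case
  proof (rule Ck_on_SucI[OF S])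
    fix x assume "x \<in> S"
    show "((\<lambda>x. f x + g x) has_derivative (\<lambda>v. frechet_derivative f (at x) v + frechet_derivative g (at x) v)) (at x)"
      by (rule has_derivative_add[OF Ck_on_SucD1[OF Suc.prems(1) \<open>x \<in> S\<close>] Ck_on_SucD1[OF Suc.prems(2) \<open>x \<in> S\<close>]])
  next
    fix v
    show "Ck_on k S (\<lambda>x. frechet_derivative f (at x) v + frechet_derivative g (at x) v)"
      by (rule Suc.IH[OF Ck_on_SucD2[OF Suc.prems(1)] Ck_on_SucD2[OF Suc.prems(2)]])
  qed
qed

lemma Ck_on_scaleR:
  fixes a :: "'a::euclidean_space \<Rightarrow> real" and b :: "'a \<Rightarrow> 'b::real_normed_vector"
  assumes S: "open S"
  shows "Ck_on k S a \<Longrightarrow> Ck_on k S b \<Longrightarrow> Ck_on k S (\<lambda>x. a x *\<^sub>R b x)"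
proof (induction k arbitrary: a b)
  case 0 then show ?case by (simp add: continuous_on_scaleR)
next
  case (Suc k)
  show ?case
  proof (rule Ck_on_SucI[OF S])
    fix x assume "x \<in> S"
    show "((\<lambda>x. a x *\<^sub>R b x) has_derivative (\<lambda>v. a x *\<^sub>R frechet_derivative b (at x) v + frechet_derivative a (at x) v *\<^sub>R b x)) (at x)"
      by (rule has_derivative_scaleR[OF Ck_on_SucD1[OF Suc.prems(1) \<open>x \<in> S\<close>] Ck_on_SucD1[OF Suc.prems(2) \<open>x \<in> S\<close>]])
  next
    fix v
    have "Ck_on k S (\<lambda>x. a x *\<^sub>R frechet_derivative b (at x) v)"
      by (rule Suc.IH[OF Ck_on_SucD0[OF Suc.prems(1)] Ck_on_SucD2[OF Suc.prems(2)]])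
    moreover have "Ck_on k S (\<lambda>x. frechet_derivative a (at x) v *\<^sub>R b x)"
      by (rule Suc.IH[OF Ck_on_SucD2[OF Suc.prems(1)] Ck_on_SucD0[OF Suc.prems(2)]])
    ultimately show "Ck_on k S (\<lambda>x. a x *\<^sub>R frechet_derivative b (at x) v + frechet_derivative a (at x) v *\<^sub>R b x)"
      by (rule Ck_on_add[OF S])
  qed
qed

lemma Ck_on_mult:
  fixes a b :: "'a::euclidean_space \<Rightarrow> real"
  assumes "open S" "Ck_on k S a" "Ck_on k S b"
  shows "Ck_on k S (\<lambda>x. a x * b x)"
  using Ck_on_scaleR[OF assms] by simp

lemma Ck_on_sum:
  assumes S: "open S" and fin: "finite I"
  shows "(\<And>i. i \<in> I \<Longrightarrow> Ck_on k S (f i)) \<Longrightarrow> Ck_on k S (\<lambda>x. \<Sum>i\<in>I. f i x)"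
  using fin
proof (induction I rule: finite_induct)
  case empty then show ?case by (simp add: Ck_on_const)
next
  case (insert i I)
  have "Ck_on k S (\<lambda>x. f i x + (\<Sum>i\<in>I. f i x))"
    by (rule Ck_on_add[OF S]) (use insert in auto)
  then show ?case using insert.hyps by simp
qed

lemma Ck_on_prod:
  fixes f :: "'i \<Rightarrow> 'a::euclidean_space \<Rightarrow> real"
  assumes S: "open S" and fin: "finite I"
  shows "(\<And>i. i \<in> I \<Longrightarrow> Ck_on k S (f i)) \<Longrightarrow> Ck_on k S (\<lambda>x. \<Prod>i\<in>I. f i x)"
  using fin
proof (induction I rule: finite_induct)
  case empty then show ?case by (simp add: Ck_on_const)
next
  case (insert i I)
  have "Ck_on k S (\<lambda>x. f i x * (\<Prod>i\<in>I. f i x))"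
    by (rule Ck_on_mult[OF S]) (use insert in auto)
  then show ?case using insert.hyps by simp
qed

lemma Ck_on_pair:
  assumes S: "open S"
  shows "Ck_on k S f \<Longrightarrow> Ck_on k S g \<Longrightarrow> Ck_on k S (\<lambda>x. (f x, g x))"
proof (induction k arbitrary: f g)
  case 0 then show ?case by (simp add: continuous_on_Pair)
next
  case (Suc k)
  show ?case
  proof (rule Ck_on_SucI[OF S])
    fix x assume "x \<in> S"
    show "((\<lambda>x. (f x, g x)) has_derivative (\<lambda>v. (frechet_derivative f (at x) v, frechet_derivative g (at x) v))) (at x)"
      by (rule has_derivative_Pair[OF Ck_on_SucD1[OF Suc.prems(1) \<open>x \<in> S\<close>] Ck_on_SucD1[OF Suc.prems(2) \<open>x \<in> S\<close>]])
  next
    fix v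
    show "Ck_on k S (\<lambda>x. (frechet_derivative f (at x) v, frechet_derivative g (at x) v))"
      by (rule Suc.IH[OF Ck_on_SucD2[OF Suc.prems(1)] Ck_on_SucD2[OF Suc.prems(2)]])
  qed
qed




lemma Ck_on_id: assumes S: "open S" shows "Ck_on k S (\<lambda>x. x)"
proof (cases k)
  case 0 then show ?thesis by (simp add: continuous_on_id)
next
  case (Suc m)
  have "Ck_on (Suc m) S (\<lambda>x. x)"
    by (rule Ck_on_SucI[OF S, where g'="\<lambda>x v. v"]) (auto intro: has_derivative_ident simp: Ck_on_const)
  then show ?thesis using Suc by simp
qed

lemma Ck_on_inner:
  assumes "open S" "Ck_on k S f" shows "Ck_on k S (\<lambda>x. f x \<bullet> b)"
  using Ck_on_linear[OF bounded_linear_inner_left assms] .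

lemma Ck_on_nth:
  assumes "open S" "Ck_on k S f" shows "Ck_on k S (\<lambda>x. f x $ i)"
  using Ck_on_linear[OF bounded_linear_vec_nth assms] .

lemma Ck_on_euclI:
  fixes f :: "'a::euclidean_space \<Rightarrow> 'b::euclidean_space"
  assumes S: "open S" and c: "\<And>b. b \<in> Basis \<Longrightarrow> Ck_on k S (\<lambda>x. f x \<bullet> b)"
  shows "Ck_on k S f"
proof -
  have "Ck_on k S (\<lambda>x. \<Sum>b\<in>Basis. (f x \<bullet> b) *\<^sub>R b)"
    by (rule Ck_on_sum[OF S finite_Basis]) (rule Ck_on_scaleR[OF S c Ck_on_const])
  then show ?thesis by (simp add: euclidean_representation)
qed

lemma Ck_on_vecI:
  fixes f :: "'a::euclidean_space \<Rightarrow> real^'n"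
  assumes S: "open S" and c: "\<And>i. Ck_on k S (\<lambda>x. f x $ i)"
  shows "Ck_on k S f"
proof -
  have "Ck_on k S (\<lambda>x. \<Sum>i\<in>UNIV. (f x $ i) *\<^sub>R axis i (1::real))"
    by (rule Ck_on_sum[OF S finite_class.finite_UNIV]) (rule Ck_on_scaleR[OF S c Ck_on_const])
  moreover have "(\<Sum>i\<in>UNIV. (f x $ i) *\<^sub>R axis i (1::real)) = f x" for x
    by (simp add: vec_eq_iff axis_def if_distrib cong: if_cong)
  ultimately show ?thesis by simp
qed

lemma linear_basis_expand:
  fixes L :: "'a::euclidean_space \<Rightarrow> 'b::real_vector"
  assumes "linear L"
  shows "L w = (\<Sum>b\<in>Basis. (w \<bullet> b) *\<^sub>R L b)"
proof -
  have "L w = L (\<Sum>b\<in>Basis. (w \<bullet> b) *\<^sub>R b)" by (simp add: euclidean_representation)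
  also have "\<dots> = (\<Sum>b\<in>Basis. (w \<bullet> b) *\<^sub>R L b)"
    by (simp add: real_vector.linear_sum[OF assms] real_vector.linear_scale[OF assms])
  finally show ?thesis .
qed

lemma Ck_on_compose:
  fixes h :: "'a::euclidean_space \<Rightarrow> 'c::euclidean_space" and g :: "'c \<Rightarrow> 'b::real_normed_vector"
  assumes S: "open S" and T: "open T" and hST: "h ` S \<subseteq> T"
  shows "Ck_on k T g \<Longrightarrow> Ck_on k S h \<Longrightarrow> Ck_on k S (\<lambda>x. g (h x))"
proof (induction k arbitrary: g)
  case 0 then show ?case using continuous_on_compose2[of T g S h] hST by simp
next
  case (Suc k)
  show ?case
  proof (rule Ck_on_SucI[OF S, where g'="\<lambda>x v. \<Sum>b\<in>Basis. (frechet_derivative h (at x) v \<bullet> b) *\<^sub>R frechet_derivative g (at (h x)) b"])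
    fix x assume x: "x \<in> S"
    then have hx: "h x \<in> T" using hST by blast
    have dg: "(g has_derivative frechet_derivative g (at (h x))) (at (h x))"
      by (rule Ck_on_SucD1[OF Suc.prems(1) hx])
    have hd: "((\<lambda>x. g (h x)) has_derivative (\<lambda>v. frechet_derivative g (at (h x)) (frechet_derivative h (at x) v))) (at x)"
      by (rule has_derivative_compose[OF Ck_on_SucD1[OF Suc.prems(2) x] dg])
    have lin: "linear (frechet_derivative g (at (h x)))"
      using dg has_derivative_linear by blast
    have eq: "\<And>v. frechet_derivative g (at (h x)) (frechet_derivative h (at x) v) = (\<Sum>b\<in>Basis. (frechet_derivative h (at x) v \<bullet> b) *\<^sub>R frechet_derivative g (at (h x)) b)"
      by (rule linear_basis_expand[OF lin])
    from hd show "((\<lambda>x. g (h x)) has_derivative (\<lambda>v. \<Sum>b\<in>Basis. (frechet_derivative h (at x) v \<bullet> b) *\<^sub>R frechet_derivative g (at (h x)) b)) (at x)"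
      by (simp only: eq)
  next
    fix v
    show "Ck_on k S (\<lambda>x. \<Sum>b\<in>Basis. (frechet_derivative h (at x) v \<bullet> b) *\<^sub>R frechet_derivative g (at (h x)) b)"
    proof (rule Ck_on_sum[OF S finite_Basis], rule Ck_on_scaleR[OF S])
      fix b :: 'c
      show "Ck_on k S (\<lambda>x. frechet_derivative h (at x) v \<bullet> b)"
        by (rule Ck_on_inner[OF S Ck_on_SucD2[OF Suc.prems(2)]])
      show "Ck_on k S (\<lambda>x. frechet_derivative g (at (h x)) b)"
        by (rule Suc.IH[OF Ck_on_SucD2[OF Suc.prems(1)] Ck_on_SucD0[OF Suc.prems(2)]])
    qed
  qed
qed



lemma open_nonzero_real: "open (- {0::real})"
  by (simp add: open_Compl)

lemma Ck_on_inverse_real: "Ck_on k (- {0::real}) (\<lambda>y. inverse y)"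
proof (induction k)
  case 0
  have "continuous_on (- {0::real}) (\<lambda>y. inverse y)"
    by (rule continuous_on_inverse[OF continuous_on_id]) auto
  then show ?case by simp
next
  case (Suc k)
  show ?case
  proof (rule Ck_on_SucI[OF open_nonzero_real, where g'="\<lambda>y v. - (inverse y * v * inverse y)"])
    fix x :: real assume "x \<in> - {0}"
    then show "((\<lambda>y. inverse y) has_derivative (\<lambda>v. - (inverse x * v * inverse x))) (at x)"
      using has_derivative_inverse'[of x UNIV] by simp
  next
    fix v :: real
    have "Ck_on k (- {0::real}) (\<lambda>y. (- v) * (inverse y * inverse y))"
      by (rule Ck_on_mult[OF open_nonzero_real Ck_on_const Ck_on_mult[OF open_nonzero_real Suc.IH Suc.IH]])
    moreover have "(\<lambda>y. (- v) * (inverse y * inverse y)) = (\<lambda>y::real. - (inverse y * v * inverse y))"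
      by (rule ext) (simp add: mult.commute mult.left_commute)
    ultimately show "Ck_on k (- {0::real}) (\<lambda>y. - (inverse y * v * inverse y))" by simp
  qed
qed

lemma Ck_on_inverse:
  fixes a :: "'a::euclidean_space \<Rightarrow> real"
  assumes S: "open S" and a: "Ck_on k S a" and nz: "\<And>x. x \<in> S \<Longrightarrow> a x \<noteq> 0"
  shows "Ck_on k S (\<lambda>x. inverse (a x))"
  by (rule Ck_on_compose[OF S open_nonzero_real _ Ck_on_inverse_real a]) (use nz in auto)

lemma Ck_on_ln: "Ck_on k {0<..} (\<lambda>y::real. ln y)"
proof (cases k)
  case 0
  have "continuous_on {0<..} (\<lambda>y::real. ln y)"
    by (rule continuous_on_ln[OF continuous_on_id]) auto
  then show ?thesis using 0 by simp
next
  case (Suc m)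
  have "Ck_on (Suc m) {0<..} (\<lambda>y::real. ln y)"
  proof (rule Ck_on_SucI[OF open_greaterThan, where g'="\<lambda>y v. inverse y * v"])
    fix x :: real assume "x \<in> {0<..}"
    then have "(ln has_field_derivative inverse x) (at x)" by (intro DERIV_ln) simp
    then show "((\<lambda>y. ln y) has_derivative (\<lambda>v. inverse x * v)) (at x)"
      using has_field_derivative_imp_has_derivative by blast
  next
    fix v :: real
    show "Ck_on m {0<..} (\<lambda>y::real. inverse y * v)"
      by (rule Ck_on_mult[OF open_greaterThan Ck_on_inverse[OF open_greaterThan Ck_on_id[OF open_greaterThan]] Ck_on_const]) simp
  qed
  then show ?thesis using Suc by simp
qed

lemma Ck_on_det:
  fixes M :: "'a::euclidean_space \<Rightarrow> real^'n^'n"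
  assumes S: "open S" and c: "\<And>i j. Ck_on k S (\<lambda>x. M x $ i $ j)"
  shows "Ck_on k S (\<lambda>x. det (M x))"
  unfolding det_def
proof (rule Ck_on_sum[OF S], simp add: finite_permutations)
  fix p :: "'n \<Rightarrow> 'n"
  show "Ck_on k S (\<lambda>x. of_int (sign p) * (\<Prod>i\<in>UNIV. M x $ i $ p i))"
    by (rule Ck_on_mult[OF S Ck_on_const Ck_on_prod[OF S finite_class.finite_UNIV c]])
qed



definition Dmat :: "(real^'n \<Rightarrow> real^'n) \<Rightarrow> real^'n \<Rightarrow> real^'n^'n" where
  "Dmat g x = matrix (frechet_derivative g (at x))"

lemma Dmat_entry: "Dmat g x $ i $ j = frechet_derivative g (at x) (axis j 1) $ i"
  by (simp add: Dmat_def matrix_def)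

lemma Ck_on_Dmat_entry:
  assumes S: "open S" and sm: "\<And>k. Ck_on k S g"
  shows "Ck_on k S (\<lambda>x. Dmat g x $ i $ j)"
  unfolding Dmat_entry
  by (rule Ck_on_nth[OF S Ck_on_SucD2[OF sm]])

lemma Ck_on_det_Dmat:
  assumes S: "open S" and sm: "\<And>k. Ck_on k S g"
  shows "Ck_on k S (\<lambda>x. det (Dmat g x))"
  by (rule Ck_on_det[OF S Ck_on_Dmat_entry[OF S sm]])

lemma Ck_on_cramer_num:
  assumes S: "open S" and sm: "\<And>k. Ck_on k S g"
  shows "Ck_on k S (\<lambda>x. det (\<chi> i l. if l = j then v $ i else Dmat g x $ i $ l))"
proof (rule Ck_on_det[OF S])
  fix i l
  show "Ck_on k S (\<lambda>x. (\<chi> i l. if l = j then v $ i else Dmat g x $ i $ l) $ i $ l)"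
  proof (cases "l = j")
    case True then show ?thesis by (simp add: Ck_on_const)
  next
    case False then show ?thesis using Ck_on_Dmat_entry[OF S sm] by simp
  qed
qed

lemma smooth_local_inverse:
  fixes g :: "real^'n \<Rightarrow> real^'n"
  assumes S: "open S" and sm: "\<And>k. Ck_on k S g" and x0: "x0 \<in> S"
    and dneg: "det (Dmat g x0) < 0"
  shows "\<exists>N. x0 \<in> N \<and> N \<subseteq> S \<and> open N \<and> inj_on g N \<and> open (g ` N) \<and>
           (\<forall>k. Ck_on k (g ` N) (the_inv_into N g)) \<and> (\<forall>x\<in>N. det (Dmat g x) < 0)"
proof -
  define dA where "dA x = det (Dmat g x)" for x
  have dA_cont: "continuous_on S dA"
    using Ck_on_det_Dmat[OF S sm, of 0] by (simp add: dA_def[abs_def])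
  define S1 where "S1 = S \<inter> dA -` {..<0}"
  have S1: "open S1" unfolding S1_def
    by (rule continuous_open_preimage[OF dA_cont S open_lessThan])
  have S1S: "S1 \<subseteq> S" by (auto simp: S1_def)
  have x0S1: "x0 \<in> S1" using x0 dneg by (simp add: S1_def dA_def)
  have S1neg: "\<And>x. x \<in> S1 \<Longrightarrow> dA x < 0" by (simp add: S1_def)
  have hd: "\<And>x. x \<in> S \<Longrightarrow> (g has_derivative frechet_derivative g (at x)) (at x)"
    by (rule Ck_on_SucD1[OF sm])
  have bl: "\<And>x. x \<in> S \<Longrightarrow> bounded_linear (frechet_derivative g (at x))"
    using hd has_derivative_bounded_linear by blast
  have mv: "\<And>x w. x \<in> S \<Longrightarrow> frechet_derivative g (at x) w = Dmat g x *v w"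
  proof -
    fix x w assume "x \<in> S"
    then have "(\<lambda>w. Dmat g x *v w) = frechet_derivative g (at x)"
      unfolding Dmat_def using bl matrix_vector_mul(3) by blast
    then show "frechet_derivative g (at x) w = Dmat g x *v w" by metis
  qed
  define f' where "f' x = Blinfun (frechet_derivative g (at x))" for x
  have f'_apply: "\<And>x. x \<in> S \<Longrightarrow> blinfun_apply (f' x) = frechet_derivative g (at x)"
    unfolding f'_def using bl bounded_linear_Blinfun_apply by blast
  have derf: "\<And>x. x \<in> S1 \<Longrightarrow> (g has_derivative blinfun_apply (f' x)) (at x)"
    using hd f'_apply S1S by auto
  have contf: "continuous_on S1 f'"
  proof (rule continuous_on_blinfun_componentwise)
    fix i :: "real^'n" assume "i \<in> Basis"
    have "continuous_on S (\<lambda>x. frechet_derivative g (at x) i)"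
      using Ck_on_SucD2[OF sm[of "Suc 0"], of i] by simp
    then have "continuous_on S1 (\<lambda>x. frechet_derivative g (at x) i)"
      using S1S continuous_on_subset by blast
    then show "continuous_on S1 (\<lambda>x. blinfun_apply (f' x) i)"
      by (rule continuous_on_eq) (use f'_apply S1S in auto)
  qed
  have "invertible (Dmat g x0)" using dneg by (simp add: invertible_det_nz)
  then obtain B where B: "Dmat g x0 ** B = mat 1" "B ** Dmat g x0 = mat 1"
    unfolding invertible_def by blast
  define invf where "invf = Blinfun (\<lambda>v. B *v v)"
  have blB: "bounded_linear (\<lambda>v. B *v v)"
    by (simp add: linear_conv_bounded_linear[symmetric] matrix_vector_mul_linear)
  have invf: "invf o\<^sub>L f' x0 = id_blinfun"
  proof (rule blinfun_eqI)
    fix v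
    show "blinfun_apply (invf o\<^sub>L f' x0) v = blinfun_apply id_blinfun v"
      using x0 B(2) by (simp add: invf_def bounded_linear_Blinfun_apply[OF blB] f'_apply mv
          matrix_vector_mul_assoc)
  qed
  obtain U' V hinv g'' where U': "open U'" "U' \<subseteq> S1" "x0 \<in> U'" and V: "open V" "g x0 \<in> V"
    and hom: "homeomorphism U' V g hinv"
    and hinvd: "\<And>y. y \<in> V \<Longrightarrow> (hinv has_derivative (g'' y)) (at y)"
    and g'': "\<And>y. y \<in> V \<Longrightarrow> g'' y = inv (blinfun_apply (f'(hinv y)))"
    and bij: "\<And>y. y \<in> V \<Longrightarrow> bij (blinfun_apply (f'(hinv y)))"
    using inverse_function_theorem[OF S1 derf contf x0S1 invf] by blast
  have hom1: "\<And>x. x \<in> U' \<Longrightarrow> hinv (g x) = x" and hom2: "g ` U' = V"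
    and hom3: "\<And>y. y \<in> V \<Longrightarrow> g (hinv y) = y" and hom4: "hinv ` V = U'"
    and hom5: "continuous_on V hinv"
    using hom unfolding homeomorphism_def by auto
  have inj: "inj_on g U'" using hom1 by (rule inj_on_inverseI)
  have tinv: "\<And>y. y \<in> V \<Longrightarrow> the_inv_into U' g y = hinv y"
  proof -
    fix y assume y: "y \<in> V"
    then have "hinv y \<in> U'" using hom4 by blast
    then show "the_inv_into U' g y = hinv y"
      using the_inv_into_f_eq[OF inj hom3[OF y]] by blast
  qed
  have hinvS1: "hinv ` V \<subseteq> S1" using hom4 U'(2) by blast
  define G where "G v x = (\<chi> j. det (\<chi> i l. if l = j then v $ i else Dmat g x $ i $ l) * inverse (dA x))" for v x
  have nz: "\<And>x. x \<in> S1 \<Longrightarrow> det (Dmat g x) \<noteq> 0"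
    using S1neg unfolding dA_def by (metis less_irrefl)
  have G_ck: "Ck_on k S1 (\<lambda>x. G v x)" for k v
    unfolding G_def
  proof (rule Ck_on_vecI[OF S1])
    fix j
    show "Ck_on k S1 (\<lambda>x. (\<chi> j. det (\<chi> i l. if l = j then v $ i else Dmat g x $ i $ l) * inverse (dA x)) $ j)"
      using Ck_on_mult[OF S1 Ck_on_subset[OF Ck_on_cramer_num[OF S sm] S1S]
          Ck_on_inverse[OF S1 Ck_on_subset[OF Ck_on_det_Dmat[OF S sm] S1S] nz]]
      by (simp add: dA_def)
  qed
  have g''G: "\<And>y. y \<in> V \<Longrightarrow> g'' y = (\<lambda>v. G v (hinv y))"
  proof
    fix y v assume y: "y \<in> V"
    let ?x = "hinv y"
    have xS1: "?x \<in> S1" using hinvS1 y by blast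
    then have xS: "?x \<in> S" using S1S by blast
    have dnz: "det (Dmat g ?x) \<noteq> 0" using S1neg[OF xS1] by (simp add: dA_def)
    have "Dmat g ?x *v G v ?x = v"
      using cramer[OF dnz, of "G v ?x" v] by (simp add: G_def dA_def divide_inverse)
    then have fw: "blinfun_apply (f' ?x) (G v ?x) = v"
      using f'_apply[OF xS] mv[OF xS] by simp
    have "inj (blinfun_apply (f' ?x))" using bij[OF y] bij_is_inj by blast
    then have "inv (blinfun_apply (f' ?x)) v = G v ?x" using fw by (rule inv_f_eq)
    then show "g'' y v = G v (hinv y)" using g''[OF y] by simp
  qed
  have ck_hinv: "Ck_on k V hinv" for k
  proof (induction k)
    case 0 then show ?case using hom5 by simp
  next
    case (Suc k)
    show ?case
    proof (rule Ck_on_SucI[OF V(1), where g'="\<lambda>y v. G v (hinv y)"])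
      fix y assume "y \<in> V"
      then show "(hinv has_derivative (\<lambda>v. G v (hinv y))) (at y)"
        using hinvd g''G by metis
    next
      fix v
      show "Ck_on k V (\<lambda>y. G v (hinv y))"
        by (rule Ck_on_compose[OF V(1) S1 hinvS1 G_ck Suc.IH])
    qed
  qed
  have "Ck_on k (g ` U') (the_inv_into U' g)" for k
  proof -
    have "Ck_on k V (the_inv_into U' g) = Ck_on k V hinv"
      by (rule Ck_on_cong[OF V(1)]) (rule tinv)
    then show ?thesis using ck_hinv hom2 by simp
  qed
  moreover have "\<forall>x\<in>U'. det (Dmat g x) < 0" using U'(2) S1neg by (auto simp: dA_def)
  ultimately show ?thesis
    using U' S1S inj hom2 V by blast
qed



lemma det_col_replace_id:
  fixes a :: "real^'n"
  shows "det (\<chi> i j. if j = k then a $ i else (if i = j then 1 else 0) :: real^'n^'n) = a $ k"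
proof -
  have "det (\<chi> i j. if j = k then (mat 1 *v a) $ i else (mat 1 :: real^'n^'n) $ i $ j) = a $ k * det (mat 1 :: real^'n^'n)"
    by (rule cramer_lemma)
  moreover have "(\<chi> i j. if j = k then (mat 1 *v a) $ i else (mat 1 :: real^'n^'n) $ i $ j) = (\<chi> i j. if j = k then a $ i else (if i = j then 1 else 0) :: real^'n^'n)"
    unfolding matrix_vector_mul_lid by (simp add: vec_eq_iff mat_def)
  ultimately show ?thesis by simp
qed

lemma mult_if_1_0: "(x::real) * (if P then 1 else 0) = (if P then x else 0)"
  by simp

lemma det_rank_one:
  fixes a b :: "real^'n"
  shows "det (\<chi> i j. (if i = j then 1 else 0) + a$i * b$j) = 1 + a \<bullet> b"
proof (cases "a = 0")
  case True
  then have "(\<chi> i j. (if i = j then 1 else 0) + a$i * b$j) = (mat 1 :: real^'n^'n)"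
    by (simp add: vec_eq_iff mat_def)
  then show ?thesis using True by simp
next
  case False
  then obtain k where ak: "a $ k \<noteq> 0" by (auto simp: vec_eq_iff)
  define M :: "real^'n^'n" where "M = (\<chi> i j. (if i = j then 1 else 0) + a$i * b$j)"
  define Q :: "real^'n^'n" where "Q = (\<chi> i j. if j = k then a $ i else (if i = j then 1 else 0))"
  define d :: "real^'n" where "d = (\<chi> j. if j = k then a \<bullet> b else b $ j)"
  define e :: "real^'n" where "e = (\<chi> i. (if i = k then 1 else 0) + d $ i)"
  define R :: "real^'n^'n" where "R = (\<chi> i j. if i = k then (if k = j then 1 else 0) + d $ j else (if i = j then 1 else 0))"
  have dQ: "det Q = a $ k" unfolding Q_def by (rule det_col_replace_id)
  have "transpose R = (\<chi> i j. if j = k then e $ i else (if i = j then 1 else 0))"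
    by (simp add: R_def e_def transpose_def vec_eq_iff)
  then have dR: "det R = 1 + a \<bullet> b"
    using det_col_replace_id[of k e] by (simp add: e_def d_def det_transpose[of R, symmetric])
  have MQ: "M ** Q = Q ** R"
  proof -
    have "(M ** Q) $ i $ j = (Q ** R) $ i $ j" for i j
    proof (cases "j = k")
      case True
      have l: "(M ** Q) $ i $ j = (\<Sum>l\<in>UNIV. ((if i = l then 1 else 0) + a$i * b$l) * a $ l)"
        using True by (simp add: matrix_matrix_mult_def M_def Q_def)
      have "(\<Sum>l\<in>UNIV. ((if i = l then 1 else 0) + a$i * b$l) * a $ l) = a $ i + a $ i * (a \<bullet> b)"
        by (simp add: distrib_right distrib_left sum.distrib sum_distrib_left inner_vec_def mult_if_delta mult_if_1_0 sum.delta mult.commute mult.left_commute)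
      moreover have "(Q ** R) $ i $ j = a $ i + a $ i * (a \<bullet> b)"
      proof -
        have "(Q ** R) $ i $ j = (\<Sum>l\<in>UNIV. Q$i$l * R$l$j)" by (simp add: matrix_matrix_mult_def)
        also have "\<dots> = (\<Sum>l\<in>UNIV. if l = k then a$i * (1 + a \<bullet> b) else 0)"
          by (rule sum.cong) (auto simp: Q_def R_def d_def True)
        also have "\<dots> = a$i + a$i*(a \<bullet> b)" by (simp add: distrib_left)
        finally show ?thesis .
      qed
      ultimately show ?thesis using l by simp
    next
      case False
      have "(M ** Q) $ i $ j = (if i = j then 1 else 0) + a$i * b$j"
      proof -
        have "(M ** Q) $ i $ j = (\<Sum>l\<in>UNIV. M$i$l * Q$l$j)" by (simp add: matrix_matrix_mult_def)
        also have "\<dots> = (\<Sum>l\<in>UNIV. if l = j then (if i = j then 1 else 0) + a$i * b$j else 0)"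
          by (rule sum.cong) (use False in \<open>auto simp: Q_def M_def\<close>)
        also have "\<dots> = (if i = j then 1 else 0) + a$i * b$j" by simp
        finally show ?thesis .
      qed
      moreover have "(Q ** R) $ i $ j = (if i = j then 1 else 0) + a$i * b$j"
      proof -
        have "(Q ** R) $ i $ j = (\<Sum>l\<in>UNIV. Q$i$l * R$l$j)" by (simp add: matrix_matrix_mult_def)
        also have "\<dots> = (\<Sum>l\<in>UNIV. (if l = k then a$i*b$j else 0) + (if l = j then (if i = j then 1 else 0) else 0))"
          by (rule sum.cong) (use False in \<open>auto simp: Q_def R_def d_def\<close>)
        also have "\<dots> = (if i = j then 1 else 0) + a$i * b$j" by (simp add: sum.distrib)
        finally show ?thesis .
      qed
      ultimately show ?thesis by simp
    qed
    then show ?thesis by (simp add: vec_eq_iff)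
  qed
  have "det M * det Q = det Q * det R"
    using MQ det_mul[of M Q] det_mul[of Q R] by (metis mult.commute)
  then have "det M = det R" using ak dQ by simp
  then show ?thesis using dR by (simp add: M_def)
qed



lemma alpha_the:
  assumes pos: "1 + 2*c*y > 0"
  shows "(THE t. alpha c t = y) = (if c = 0 then y else ln (1 + 2*c*y) / (2*c))"
proof (cases "c = 0")
  case True then show ?thesis by (simp add: alpha_def)
next
  case False
  let ?t = "ln (1 + 2*c*y) / (2*c)"
  show ?thesis
  proof -
    have "(THE t. alpha c t = y) = ?t"
    proof (rule the_equality)
      have "exp (2*c*?t) = 1 + 2*c*y" using False pos by simp
      then show "alpha c ?t = y" using False by (simp add: alpha_def)
    next
      fix t assume "alpha c t = y"
      then have "exp (2*c*t) = 1 + 2*c*y" using False by (simp add: alpha_def field_simps)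
      then have "2*c*t = ln (1 + 2*c*y)" by (metis ln_exp)
      then show "t = ?t" using False by (simp add: field_simps)
    qed
    then show ?thesis using False by simp
  qed
qed

lemma vec_linear_expand:
  fixes L :: "real^'n \<Rightarrow> real"
  assumes "linear L"
  shows "L w = (\<Sum>j\<in>UNIV. w $ j * L (axis j 1))"
proof -
  have "(\<Sum>j\<in>UNIV. (w $ j) *\<^sub>R axis j (1::real)) = w"
    by (simp add: vec_eq_iff axis_def if_distrib cong: if_cong)
  then have "L w = L (\<Sum>j\<in>UNIV. (w $ j) *\<^sub>R axis j (1::real))" by simp
  also have "\<dots> = (\<Sum>j\<in>UNIV. w $ j * L (axis j 1))"
    by (simp add: real_vector.linear_sum[OF assms] real_vector.linear_scale[OF assms])
  finally show ?thesis .
qed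

theorem mainTheorem7:
  fixes U :: "(real^'n) set" and F :: "real^'n \<Rightarrow> real^'n \<Rightarrow> real"
    and V :: "real^'n \<Rightarrow> real^'n" and c :: real
    and D :: "(real \<times> (real^'n)) set" and Psi :: "real \<Rightarrow> real^'n \<Rightarrow> real^'n"
    and W :: "(real^'n) set" and f :: "real^'n \<Rightarrow> real" and gradf :: "real^'n \<Rightarrow> real^'n"
    and x0 :: "real^'n"
  assumes "finsler_metric U F"
    and "smooth_on U V"
    and "is_local_flow U V D Psi"
    and "homothetic F D Psi c"
    and "\<forall>x\<in>U. F x (- V x) > 1"
    and "open W" and "W \<subseteq> U" and "x0 \<in> W"
    and "smooth_on W f" and "f x0 = 0"
    and "\<forall>x\<in>W. is_finsler_gradient F f x (gradf x)"
    and "\<forall>x\<in>W. F x (gradf x) = 1"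
    and "\<forall>x\<in>W. fund_tensor F x (gradf x) (gradf x) (V x) < -1"
  shows "\<exists>N. x0 \<in> N \<and> N \<subseteq> W \<and>
           diffeo_onto_image N (level_flow_map c f Psi) \<and>
           orientation_reversing_on N (level_flow_map c f Psi)"
proof -
  note fl = assms(3)[unfolded is_local_flow_def]
  have Dopen: "open D" using fl by blast
  have DU: "D \<subseteq> UNIV \<times> U" using fl by blast
  have D0: "\<And>x. x \<in> U \<Longrightarrow> (0, x) \<in> D" using fl by blast
  have Phi_sm: "\<And>k. Ck_on k D (\<lambda>(t,x). Psi t x)" using fl by (simp add: smooth_on_def)
  have Psi0: "\<And>x. x \<in> U \<Longrightarrow> Psi 0 x = x" using fl by blast
  have vd: "\<And>t x. (t, x) \<in> D \<Longrightarrow> ((\<lambda>s. Psi s x) has_vector_derivative V (Psi t x)) (at t)"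
    using fl by blast
  have W: "open W" by (rule assms(6))
  have x0W: "x0 \<in> W" by (rule assms(8))
  have x0U: "x0 \<in> U" using assms(7,8) by blast
  have f_sm: "\<And>k. Ck_on k W f" using assms(9) by (simp add: smooth_on_def)
  define df where "df = frechet_derivative f (at x0)"
  have f_hd: "(f has_derivative df) (at x0)" unfolding df_def by (rule Ck_on_SucD1[OF f_sm x0W])
  have df_lin: "linear df" using f_hd has_derivative_linear by blast
  have dfV: "df (V x0) < -1"
    using assms(11,13) x0W by (auto simp: is_finsler_gradient_def df_def)
  define tau where "tau x = (if c = 0 then f x else ln (1 + 2*c*f x) / (2*c))" for x
  define W1 where "W1 = W \<inter> (\<lambda>x. 1 + 2*c*f x) -` {0<..}"
  have hck: "\<And>k. Ck_on k W (\<lambda>x. 1 + 2*c*f x)"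
    by (rule Ck_on_add[OF W Ck_on_const Ck_on_mult[OF W Ck_on_const f_sm]])
  have W1: "open W1" unfolding W1_def
    using continuous_open_preimage[OF _ W open_greaterThan] hck[of 0] by simp
  have W1W: "W1 \<subseteq> W" by (auto simp: W1_def)
  have W1pos: "\<And>x. x \<in> W1 \<Longrightarrow> 1 + 2*c*f x > 0" by (auto simp: W1_def)
  have x0W1: "x0 \<in> W1" using x0W assms(10) by (simp add: W1_def)
  have tau_ck: "Ck_on k W1 tau" for k
  proof (cases "c = 0")
    case True
    have "tau x = f x" for x using True unfolding tau_def by simp
    then have "tau = f" by (rule ext)
    then show ?thesis using Ck_on_subset[OF f_sm W1W] by simp
  next
    case False
    have img: "(\<lambda>x. 1 + 2*c*f x) ` W1 \<subseteq> {0<..}" using W1pos by auto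
    note L = Ck_on_compose[OF W1 open_greaterThan img Ck_on_ln Ck_on_subset[OF hck W1W]]
    note A = Ck_on_mult[OF W1 L Ck_on_const[of k W1 "inverse (2*c)"]]
    have "tau x = ln (1 + 2*c*f x) * inverse (2*c)" for x
      unfolding tau_def if_not_P[OF False] by (rule divide_inverse)
    then have "tau = (\<lambda>x. ln (1 + 2*c*f x) * inverse (2*c))" by (rule ext)
    then show ?thesis using A by simp
  qed
  define P where "P x = (tau x, x)" for x
  have P_ck: "Ck_on k W1 P" for k
    unfolding P_def[abs_def] by (rule Ck_on_pair[OF W1 tau_ck Ck_on_id[OF W1]])
  define S0 where "S0 = W1 \<inter> P -` D"
  have S0: "open S0" unfolding S0_def
    using continuous_open_preimage[OF _ W1 Dopen] P_ck[of 0] by simp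
  have S0W1: "S0 \<subseteq> W1" by (auto simp: S0_def)
  have tau0: "tau x0 = 0" using assms(10) by (simp add: tau_def)
  have x0S0: "x0 \<in> S0" using x0W1 D0[OF x0U] tau0 by (simp add: S0_def P_def)
  have PS0: "P ` S0 \<subseteq> D" by (auto simp: S0_def)
  define Psi' where "Psi' x = Psi (tau x) x" for x
  have Psi'_ck: "Ck_on k S0 Psi'" for k
  proof -
    have "Ck_on k S0 (\<lambda>x. (\<lambda>(t,x). Psi t x) (P x))"
      by (rule Ck_on_compose[OF S0 Dopen PS0 Phi_sm Ck_on_subset[OF P_ck S0W1]])
    then show ?thesis by (simp add: P_def Psi'_def[abs_def])
  qed
  define G where "G = level_flow_map c f Psi"
  have GPsi': "\<And>x. x \<in> S0 \<Longrightarrow> G x = Psi' x"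
  proof -
    fix x assume "x \<in> S0"
    then have "1 + 2*c*f x > 0" using S0W1 W1pos by blast
    then show "G x = Psi' x"
      by (simp add: G_def level_flow_map_def Psi'_def tau_def alpha_the)
  qed
  have G_ck: "Ck_on k S0 G" for k
    using Psi'_ck[of k] Ck_on_cong[OF S0 GPsi', where k=k] by simp
  define Phi where "Phi = (\<lambda>(t::real, x::real^'n). Psi t x)"
  define LPhi where "LPhi = frechet_derivative Phi (at (0, x0))"
  have P0: "(0, x0) \<in> D" by (rule D0[OF x0U])
  have Phi_hd: "(Phi has_derivative LPhi) (at (0, x0))"
    unfolding LPhi_def Phi_def by (rule Ck_on_SucD1[OF Phi_sm P0])
  have LPhi_lin: "linear LPhi" using Phi_hd has_derivative_linear by blast
  have LPhi_t: "(\<lambda>s. LPhi (s, 0)) = (\<lambda>s. s *\<^sub>R V x0)"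
  proof (rule has_derivative_unique)
    have "((\<lambda>t. (t, x0)) has_derivative (\<lambda>s. (s, 0))) (at 0)"
      by (rule has_derivative_Pair[OF has_derivative_ident has_derivative_const])
    from has_derivative_compose[OF this Phi_hd[unfolded]]
    show "((\<lambda>t. Psi t x0) has_derivative (\<lambda>s. LPhi (s, 0))) (at 0)"
      by (simp add: Phi_def)
    have "((\<lambda>s. Psi s x0) has_vector_derivative V (Psi 0 x0)) (at 0)" by (rule vd[OF P0])
    then show "((\<lambda>t. Psi t x0) has_derivative (\<lambda>s. s *\<^sub>R V x0)) (at 0)"
      using Psi0[OF x0U] by (simp add: has_vector_derivative_def)
  qed
  have LPhi_x: "(\<lambda>w. LPhi (0, w)) = (\<lambda>w. w)"
  proof (rule has_derivative_unique)
    have "((\<lambda>x. (0::real, x)) has_derivative (\<lambda>w. (0, w))) (at x0)"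
      by (rule has_derivative_Pair[OF has_derivative_const has_derivative_ident])
    from has_derivative_compose[OF this Phi_hd]
    show "((\<lambda>x. Psi 0 x) has_derivative (\<lambda>w. LPhi (0, w))) (at x0)"
      by (simp add: Phi_def)
    show "((\<lambda>x. Psi 0 x) has_derivative (\<lambda>w. w)) (at x0)"
      by (rule has_derivative_transform_within_open[OF has_derivative_ident W x0W])
         (use Psi0 assms(7) in auto)
  qed
  have LPhi_eq: "\<And>s w. LPhi (s, w) = s *\<^sub>R V x0 + w"
  proof -
    fix s w
    have "LPhi (s, w) = LPhi ((s, 0) + (0, w))" by simp
    also have "\<dots> = LPhi (s, 0) + LPhi (0, w)" by (rule linear_add[OF LPhi_lin])
    also have "\<dots> = s *\<^sub>R V x0 + w" using LPhi_t LPhi_x by metis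
    finally show "LPhi (s, w) = s *\<^sub>R V x0 + w" .
  qed
  have tau_hd: "(tau has_derivative df) (at x0)"
  proof (cases "c = 0")
    case True
    have "tau x = f x" for x using True unfolding tau_def by simp
    then have "tau = f" by (rule ext)
    then show ?thesis using f_hd by simp
  next
    case False
    have "tau x = inverse (2*c) * ln (1 + 2*c*f x)" for x
      unfolding tau_def if_not_P[OF False] divide_inverse by (rule mult.commute)
    then have tau_eq: "tau = (\<lambda>x. inverse (2*c) * ln (1 + 2*c*f x))" by (rule ext)
    have h1: "((\<lambda>x. 1 + 2*c*f x) has_derivative (\<lambda>v. 0 + 2*c*df v)) (at x0)"
      by (rule has_derivative_add[OF has_derivative_const has_derivative_mult_right[OF f_hd]])
    have "(ln has_field_derivative inverse (1 + 2*c*f x0)) (at (1 + 2*c*f x0))"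
      using assms(10) by (intro DERIV_ln) simp
    then have h2: "(ln has_derivative (\<lambda>u. inverse (1 + 2*c*f x0) * u)) (at (1 + 2*c*f x0))"
      using has_field_derivative_imp_has_derivative by blast
    have "((\<lambda>x. ln (1 + 2*c*f x)) has_derivative (\<lambda>v. inverse (1 + 2*c*f x0) * (0 + 2*c*df v))) (at x0)"
      by (rule has_derivative_compose[OF h1 h2])
    then have "((\<lambda>x. inverse (2*c) * ln (1 + 2*c*f x)) has_derivative (\<lambda>v. inverse (2*c) * (inverse (1 + 2*c*f x0) * (0 + 2*c*df v)))) (at x0)"
      by (rule has_derivative_mult_right)
    moreover have "(\<lambda>v. inverse (2*c) * (inverse (1 + 2*c*f x0) * (0 + 2*c*df v))) = df"
      using False assms(10) by (simp add: fun_eq_iff)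
    ultimately show ?thesis using tau_eq by simp
  qed
  have Psi'_hd: "(Psi' has_derivative (\<lambda>v. df v *\<^sub>R V x0 + v)) (at x0)"
  proof -
    have "(P has_derivative (\<lambda>v. (df v, v))) (at x0)"
      unfolding P_def by (rule has_derivative_Pair[OF tau_hd has_derivative_ident])
    moreover have "P x0 = (0, x0)" by (simp add: P_def tau0)
    ultimately have "((\<lambda>x. Phi (P x)) has_derivative (\<lambda>v. LPhi (df v, v))) (at x0)"
      using has_derivative_compose[of P _ x0 UNIV Phi LPhi] Phi_hd by simp
    moreover have "(\<lambda>x. Phi (P x)) = Psi'" by (simp add: fun_eq_iff Phi_def P_def Psi'_def)
    ultimately show ?thesis using LPhi_eq by simp
  qed
  have G_hd: "(G has_derivative (\<lambda>v. df v *\<^sub>R V x0 + v)) (at x0)"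
    by (rule has_derivative_transform_within_open[OF Psi'_hd S0 x0S0]) (use GPsi' in auto)
  have DG: "frechet_derivative G (at x0) = (\<lambda>v. df v *\<^sub>R V x0 + v)"
    by (rule frechet_derivative_at[OF G_hd, symmetric])
  define bv :: "real^'n" where "bv = (\<chi> j. df (axis j 1))"
  have "Dmat G x0 = (\<chi> i j. (if i = j then 1 else 0) + V x0 $ i * bv $ j)"
    by (simp add: vec_eq_iff Dmat_entry DG bv_def axis_def mult.commute)
  then have "det (Dmat G x0) = 1 + V x0 \<bullet> bv" using det_rank_one by simp
  also have "V x0 \<bullet> bv = df (V x0)"
    using vec_linear_expand[OF df_lin, of "V x0"] by (simp add: inner_vec_def bv_def)
  finally have detneg: "det (Dmat G x0) < 0" using dfV by simp
  obtain N where N: "x0 \<in> N" "N \<subseteq> S0" "open N" "inj_on G N" "open (G ` N)"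
      "\<forall>k. Ck_on k (G ` N) (the_inv_into N G)" "\<forall>x\<in>N. det (Dmat G x) < 0"
    using smooth_local_inverse[OF S0 G_ck x0S0 detneg] by blast
  have NW: "N \<subseteq> W" using N(2) S0W1 W1W by blast
  have "diffeo_onto_image N G"
    unfolding diffeo_onto_image_def smooth_on_def
    using N Ck_on_subset[OF G_ck N(2)] by blast
  moreover have "orientation_reversing_on N G"
    using N(7) by (simp add: orientation_reversing_on_def Dmat_def)
  ultimately show ?thesis using N(1) NW unfolding G_def by blast
qed


end
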